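(* Let $\lambda\neq0$ be real and $n,k\ge0$ integers. Then $$\sum_{j=0}^{n}\binom{n+k}{j}S_{2,\lambda}^{[2]}(n-j+k,2k)\,\beta_{j,\lambda}^{(k)}=\binom{n+k}{k}\sum_{j=0}^{k}\binom{k}{j}(-1)^{k-j}\beta_{n,\lambda}^{(k-j)}.$$
   Context: For real $\lambda\neq0$, $(x)_{0,\lambda}=1$, $(x)_{n,\lambda}=x(x-\lambda)\cdots(x-(n-1)\lambda)$ for $n\ge1$; $e_{\lambda}(t)=\sum_{k\ge0}(1)_{k,\lambda}\frac{t^k}{k!}=(1+\lambda t)^{1/\lambda}$ (formal power series). The $2$-truncated degenerate Stirling numbers of the second kind: for $k\ge0$, $\frac{1}{k!}(e_\lambda(t)-1-t)^k=\sum_{n\ge 2k}S^{[2]}_{2,\lambda}(n,2k)\frac{t^n}{n!}$, with $S^{[2]}_{2,\lambda}(n,2k)=0$ for $0\le n<2k$. The degenerate Bernoulli numbers of order $\alpha$ (a nonnegative integer here): $\big(\frac{t}{e_\lambda(t)-1}\big)^\alpha=\sum_{n\ge0}\beta^{(\alpha)}_{n,\lambda}\frac{t^n}{n!}$; in particular $\beta^{(0)}_{n,\lambda}=1$ if $n=0$ and $0$ otherwise. *)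

theory Defs
  imports "HOL-Computational_Algebra.Formal_Power_Series"
begin

definition dfall :: "real \<Rightarrow> real \<Rightarrow> nat \<Rightarrow> real" where
  "dfall lam x n = (\<Prod>i<n. x - of_nat i * lam)"

definition deg_exp :: "real \<Rightarrow> real fps" where
  "deg_exp lam = Abs_fps (\<lambda>k. dfall lam 1 k / fact k)"

text \<open>trunc_S2 lam n k is the 2-truncated degenerate Stirling number S^{[2]}_{2,lambda}(n, 2k):
  (e_lambda(t) - 1 - t)^k / k! = sum_n S(n,2k) t^n / n!.\<close>
definition trunc_S2 :: "real \<Rightarrow> nat \<Rightarrow> nat \<Rightarrow> real" where
  "trunc_S2 lam n k = fact n * fps_nth ((deg_exp lam - 1 - fps_X) ^ k / fps_const (fact k)) n"

definition deg_bernoulli :: "real \<Rightarrow> nat \<Rightarrow> nat \<Rightarrow> real" where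
  "deg_bernoulli lam alpha n = fact n * fps_nth ((fps_X / (deg_exp lam - 1)) ^ alpha) n"

end

theory Submission
  imports Defs
begin

unbundle fps_syntax

lemma div_const_nth: "c \<noteq> 0 \<Longrightarrow> (f / fps_const (c::real)) $ n = f $ n / c"
  by (simp add: fps_divide_unit fps_const_inverse field_simps)

lemma neg_pow_const: "(- B) ^ m = fps_const ((-1)^m) * (B ^ m :: real fps)"
  by (induct m) (simp_all add: algebra_simps flip: fps_const_neg)

lemma of_nat_mult_nth: "(of_nat c * G) $ n = of_nat c * (G $ n :: real)"
proof -
  have "(of_nat c * G) = fps_const (of_nat c) * G" by (simp only: fps_of_nat)
  thus ?thesis by simp
qed

lemma term_nth: "(of_nat c * 1 ^ j * (- B) ^ m) $ n = of_nat c * (-1)^m * (B ^ m $ n)"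
  for B :: "real fps"
  by (simp only: power_one mult_1_right neg_pow_const of_nat_mult_nth fps_mult_left_const_nth mult.assoc)

theorem theorem7:
  fixes lam :: real and n k :: nat
  assumes "lam \<noteq> 0"
  shows "(\<Sum>j=0..n. of_nat ((n + k) choose j) * trunc_S2 lam (n - j + k) k * deg_bernoulli lam k j)
       = of_nat ((n + k) choose k) *
         (\<Sum>j=0..k. of_nat (k choose j) * (-1) ^ (k - j) * deg_bernoulli lam (k - j) n)"
proof -
  define E where "E = deg_exp lam - 1"
  define F where "F = deg_exp lam - 1 - fps_X"
  define B where "B = fps_X / E"
  have E1: "E $ 1 = 1" by (simp add: E_def deg_exp_def dfall_def)
  have E0: "E \<noteq> 0" using E1 by auto
  have "subdegree E \<le> 1" using E1 by (intro subdegree_leI) simp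
  hence BE: "B * E = fps_X" unfolding B_def
    by (intro fps_times_divide_eq E0) simp
  have F0: "F $ 0 = 0" by (simp add: F_def deg_exp_def dfall_def)
  have FE: "F = E - fps_X" by (simp add: F_def E_def)
  have FB: "F * B = fps_X * (1 - B)"
    using BE by (simp add: FE algebra_simps)
  have key: "B ^ k * F ^ k = fps_X ^ k * (\<Sum>j\<le>k. of_nat (k choose j) * 1 ^ j * (- B) ^ (k - j))"
  proof -
    have "B ^ k * F ^ k = (F * B) ^ k" by (simp add: power_mult_distrib mult.commute)
    also have "\<dots> = fps_X ^ k * (1 + (- B)) ^ k" by (simp add: FB power_mult_distrib)
    also have "(1 + (- B)) ^ k = (\<Sum>j\<le>k. of_nat (k choose j) * 1 ^ j * (- B) ^ (k - j))"
      by (rule binomial_ring)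
    finally show ?thesis .
  qed
  have lhs: "(\<Sum>j=0..n. of_nat ((n + k) choose j) * trunc_S2 lam (n - j + k) k * deg_bernoulli lam k j)
     = fact (n + k) / fact k * (B ^ k * F ^ k) $ (n + k)"
  proof -
    have "(B ^ k * F ^ k) $ (n + k) = (\<Sum>i=0..n+k. B^k $ i * F^k $ (n + k - i))"
      by (rule fps_mult_nth)
    also have "\<dots> = (\<Sum>i=0..n. B^k $ i * F^k $ (n + k - i))"
    proof (rule sum.mono_neutral_right)
      show "\<forall>i\<in>{0..n + k} - {0..n}. B ^ k $ i * F ^ k $ (n + k - i) = 0"
        using startsby_zero_power_prefix[OF F0, of k] by auto
    qed auto
    finally have c: "(B ^ k * F ^ k) $ (n + k) = (\<Sum>i=0..n. B^k $ i * F^k $ (n + k - i))" .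
    have "(\<Sum>j=0..n. of_nat ((n + k) choose j) * trunc_S2 lam (n - j + k) k * deg_bernoulli lam k j)
        = (\<Sum>j=0..n. fact (n + k) / fact k * (B^k $ j * F^k $ (n + k - j)))"
    proof (rule sum.cong)
      fix j assume j: "j \<in> {0..n}"
      hence jj: "n - j + k = n + k - j" by auto
      have ch: "real ((n + k) choose j) * fact (n + k - j) * fact j = fact (n + k)"
        using j by (simp add: binomial_fact)
      show "of_nat ((n + k) choose j) * trunc_S2 lam (n - j + k) k * deg_bernoulli lam k j
          = fact (n + k) / fact k * (B^k $ j * F^k $ (n + k - j))"
        unfolding trunc_S2_def deg_bernoulli_def jj E_def[symmetric] unfolding FE[symmetric] B_def[symmetric]
        apply (simp add: div_const_nth)
        apply (subst ch[symmetric])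
        by (simp add: divide_inverse mult_ac)
    qed simp
    also have "\<dots> = fact (n + k) / fact k * (\<Sum>i=0..n. B^k $ i * F^k $ (n + k - i))"
      by (simp add: sum_distrib_left)
    finally show ?thesis using c by simp
  qed
  have "(B ^ k * F ^ k) $ (n + k) = (\<Sum>j\<le>k. of_nat (k choose j) * (- 1) ^ (k - j) * B ^ (k - j) $ n)"
    by (simp only: key fps_X_power_mult_nth fps_sum_nth term_nth not_add_less2 if_False add_diff_cancel_right')
  hence "(B ^ k * F ^ k) $ (n + k) = (\<Sum>j=0..k. of_nat (k choose j) * (-1) ^ (k - j) * deg_bernoulli lam (k - j) n) / fact n"
    by (simp add: deg_bernoulli_def B_def E_def atLeast0AtMost sum_divide_distrib mult.assoc)
  with lhs show ?thesis
    by (simp add: binomial_fact)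
qed

end
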